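(* For $n\ge3$ the Hilbert series of $K^{\infty}_n$ is $$\mathcal{H}^{[n]}_K(t)=\sum_{k\ge0}c^{[n]}_kt^k=\frac{1}{t^n\,\mathcal{K}_n(1/t)}.$$
   Context: $K^{\infty}_n=\langle y_1,\dots,y_n\mid y_iy_j=y_jy_i\ (j+2\le i\le n-1),\ y_ny_k=y_ky_n\ (1\le k\le n-3)\rangle$, and $c^{[n]}_k$ is the number of its elements of length $k$. $\mathcal{K}_n(\lambda)=\det(\lambda I_n-M_n)$ where $M_n$ is the $n\times n$ matrix with $(M_n)_{j,i}=1$ if $i\ge j-1$ or $(j,i)=(n,n-2)$, and $0$ otherwise. *)

theory Defs
  imports "Jordan_Normal_Form.Char_Poly" "HOL-Computational_Algebra.Polynomial_FPS"
begin

text \<open>Generators y_1..y_n are represented by the letters 1..n. The defining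
relations of the monoid are commutations of pairs of generators.\<close>

definition Kcomm :: "nat \<Rightarrow> nat \<Rightarrow> nat \<Rightarrow> bool" where
  "Kcomm n a b \<longleftrightarrow>
     (1 \<le> b \<and> b + 2 \<le> a \<and> a \<le> n - 1) \<or> (1 \<le> a \<and> a + 2 \<le> b \<and> b \<le> n - 1) \<or>
     (a = n \<and> 1 \<le> b \<and> b \<le> n - 3) \<or> (b = n \<and> 1 \<le> a \<and> a \<le> n - 3)"

definition Kstep :: "nat \<Rightarrow> (nat list \<times> nat list) set" where
  "Kstep n = {(us @ [a, b] @ vs, us @ [b, a] @ vs) | us vs a b. Kcomm n a b}"

definition Kequiv :: "nat \<Rightarrow> (nat list \<times> nat list) set" where
  "Kequiv n = (Kstep n \<union> (Kstep n)\<inverse>)\<^sup>*"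

definition Kwords :: "nat \<Rightarrow> nat \<Rightarrow> nat list set" where
  "Kwords n k = {xs. length xs = k \<and> set xs \<subseteq> {1..n}}"

text \<open>c^[n]_k: number of elements of length k of the monoid K^infty_n
  (relations are homogeneous, so length is well defined).\<close>
definition Kcount :: "nat \<Rightarrow> nat \<Rightarrow> nat" where
  "Kcount n k = card (Kwords n k // (Kequiv n \<inter> (Kwords n k \<times> Kwords n k)))"

text \<open>The matrix M_n (0-indexed): entry (j,i) is 1 iff i >= j-1 or (j,i) = (n,n-2)
  in 1-indexed terms.\<close>
definition Kmat :: "nat \<Rightarrow> int mat" where
  "Kmat n = mat n n (\<lambda>(j, i). if j \<le> i + 1 \<or> (j = n - 1 \<and> i = n - 3) then 1 else 0)"

definition Kpoly :: "nat \<Rightarrow> int poly" where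
  "Kpoly n = char_poly (Kmat n)"

text \<open>The polynomial t^n K_n(1/t).\<close>
definition Kpoly_rev :: "nat \<Rightarrow> int poly" where
  "Kpoly_rev n = (\<Sum>i\<le>n. monom (coeff (Kpoly n) (n - i)) i)"

end

theory Submission
  imports Defs
begin


definition tridiag :: "nat \<Rightarrow> (nat \<Rightarrow> 'a::comm_ring_1) \<Rightarrow> (nat \<Rightarrow> 'a) \<Rightarrow> (nat \<Rightarrow> 'a) \<Rightarrow> 'a mat" where
  "tridiag m d u l = mat m m (\<lambda>(i,j). if i = j then d i else if j = Suc i then u i
      else if i = Suc j then l j else 0)"

fun tri :: "(nat \<Rightarrow> 'a::comm_ring_1) \<Rightarrow> (nat \<Rightarrow> 'a) \<Rightarrow> (nat \<Rightarrow> 'a) \<Rightarrow> nat \<Rightarrow> 'a" where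
  "tri d u l 0 = 1"
| "tri d u l (Suc 0) = d 0"
| "tri d u l (Suc (Suc m)) = d (Suc m) * tri d u l (Suc m) - u m * l m * tri d u l m"

lemma tridiag_carrier[simp]: "tridiag m d u l \<in> carrier_mat m m"
  unfolding tridiag_def by simp

lemma tridiag_delete_last: "mat_delete (tridiag (Suc m) d u l) m m = tridiag m d u l"
  by (rule eq_matI, auto simp: mat_delete_def tridiag_def)

lemma det_tridiag: "det (tridiag m d u l) = tri d u l m"
proof (induction d u l m rule: tri.induct)
  case (1 d u l)
  have "tridiag 0 d u l \<in> carrier_mat 0 0" by simp
  then show ?case by (metis det_dim_zero tri.simps(1))
next
  case (2 d u l)
  then show ?case by (subst det_single, auto simp: tridiag_def)
next
  case (3 d u l m)
  let ?A = "tridiag (Suc (Suc m)) d u l"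
  have A: "?A \<in> carrier_mat (Suc (Suc m)) (Suc (Suc m))" by simp
  have "det ?A = (\<Sum>i<Suc (Suc m). ?A $$ (i, Suc m) * cofactor ?A i (Suc m))"
    by (rule laplace_expansion_column[OF A], simp)
  also have "\<dots> = ?A $$ (m, Suc m) * cofactor ?A m (Suc m) + ?A $$ (Suc m, Suc m) * cofactor ?A (Suc m) (Suc m)"
  proof -
    have "(\<Sum>i<m. ?A $$ (i, Suc m) * cofactor ?A i (Suc m)) = 0"
      by (rule sum.neutral, auto simp: tridiag_def)
    then show ?thesis by (simp add: lessThan_Suc)
  qed
  also have "cofactor ?A (Suc m) (Suc m) = tri d u l (Suc m)"
    unfolding cofactor_def using tridiag_delete_last[of "Suc m" d u l] 3(1) by simp
  also have "cofactor ?A m (Suc m) = - (l m * tri d u l m)"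
  proof -
    let ?N = "mat_delete ?A m (Suc m)"
    have N: "?N \<in> carrier_mat (Suc m) (Suc m)" by (simp add: mat_delete_def tridiag_def)
    have "det ?N = (\<Sum>j<Suc m. ?N $$ (m, j) * cofactor ?N m j)"
      by (rule laplace_expansion_row[OF N], simp)
    also have "\<dots> = ?N $$ (m, m) * cofactor ?N m m"
    proof -
      have "(\<Sum>j<m. ?N $$ (m, j) * cofactor ?N m j) = 0"
        by (rule sum.neutral, auto simp: tridiag_def mat_delete_def)
      then show ?thesis by (simp add: lessThan_Suc)
    qed
    also have "?N $$ (m, m) = l m" by (simp add: tridiag_def mat_delete_def)
    finally have dN: "det ?N = l m * cofactor ?N m m" .
    have "mat_delete ?N m m = tridiag m d u l"
      by (rule eq_matI, auto simp: mat_delete_def tridiag_def)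
    then have "det ?N = l m * tri d u l m" using 3(2) dN by (simp add: cofactor_def)
    then show ?thesis by (simp add: cofactor_def)
  qed
  also have "?A $$ (m, Suc m) = u m" by (simp add: tridiag_def)
  also have "?A $$ (Suc m, Suc m) = d (Suc m)" by (simp add: tridiag_def)
  finally show ?case by (simp add: algebra_simps)
qed

fun rowops :: "nat \<Rightarrow> 'a::comm_ring_1 mat \<Rightarrow> 'a mat" where
  "rowops 0 A = A"
| "rowops (Suc k) A = addrow (-1) k (Suc k) (rowops k A)"

lemma rowops_carrier[simp]: "A \<in> carrier_mat n n \<Longrightarrow> rowops k A \<in> carrier_mat n n"
  by (induction k) auto

lemma rowops_dim[simp]: "dim_row (rowops k A) = dim_row A" "dim_col (rowops k A) = dim_col A"
  by (induction k) auto

lemma rowops_index: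
  assumes A: "A \<in> carrier_mat n n" and k: "k < n" and i: "i < n" and j: "j < n"
  shows "rowops k A $$ (i,j) = (if i < k then A $$ (i,j) - A $$ (Suc i, j) else A $$ (i,j))"
  using k i j
proof (induction k arbitrary: i)
  case 0
  then show ?case by simp
next
  case (Suc k)
  have "rowops (Suc k) A $$ (i,j) = (if k = i then -1 * (rowops k A $$ (Suc k, j)) + rowops k A $$ (i,j)
     else rowops k A $$ (i,j))" using Suc.prems A by simp
  then show ?case using Suc A by auto
qed

lemma rowops_det:
  assumes A: "A \<in> carrier_mat n n" and k: "k < n"
  shows "det (rowops k A) = det A"
  using k
proof (induction k)
  case 0
  then show ?case by simp
next
  case (Suc k)
  have "det (rowops (Suc k) A) = det (rowops k A)"
    by (simp, rule det_addrow[of _ n], insert Suc.prems A, auto)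
  then show ?case using Suc by simp
qed

abbreviation pX :: "int poly" where "pX \<equiv> [:0,1:]"

lemma Kmat_carrier[simp]: "Kmat n \<in> carrier_mat n n" by (simp add: Kmat_def)

lemma C_index:
  assumes "i < n" "j < n"
  shows "char_poly_matrix (Kmat n) $$ (i,j) = (if i = j then pX else 0)
     - (if i \<le> Suc j \<or> (i = n - 1 \<and> j = n - 3) then 1 else 0)"
  using assms by (auto simp: char_poly_matrix_def Kmat_def)

definition dK :: "nat \<Rightarrow> nat \<Rightarrow> int poly" where "dK n j = (if j = n - 2 then pX - 1 else pX)"
definition uK :: "nat \<Rightarrow> nat \<Rightarrow> int poly" where "uK n j = (if j = n - 2 then - 1 else - pX)"
definition lK :: "nat \<Rightarrow> nat \<Rightarrow> int poly" where "lK n j = (if j = n - 2 then - pX else - 1)"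

lemma C_carrier: "char_poly_matrix (Kmat n) \<in> carrier_mat n n" by simp

lemma C_dims: "dim_row (char_poly_matrix (Kmat n)) = n" "dim_col (char_poly_matrix (Kmat n)) = n"
  using C_carrier[of n] unfolding carrier_mat_def by auto

lemma a1_index:
  assumes "i < n" "j < n"
  shows "addrow (-1) (n-1) (n-2) (char_poly_matrix (Kmat n)) $$ (i,j) = 
     (if i = n - 1 then -1 * char_poly_matrix (Kmat n) $$ (n-2,j) + char_poly_matrix (Kmat n) $$ (i,j)
      else char_poly_matrix (Kmat n) $$ (i,j))"
  using assms by (simp add: C_dims)

lemma B_index:
  assumes n: "n \<ge> 3" and i: "i < n" and j: "j < n"
  shows "rowops (n-2) (addrow (-1) (n-1) (n-2) (char_poly_matrix (Kmat n))) $$ (i,j)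
    = (if i = j then dK n i else if j = Suc i then uK n i else if i = Suc j then lK n j else 0)"
proof -
  let ?C = "char_poly_matrix (Kmat n)"
  obtain m where nm: "n = Suc (Suc (Suc m))" using n by (intro that[of "n - 3"]) simp
  have A1: "addrow (-1) (n-1) (n-2) ?C \<in> carrier_mat n n" using C_carrier by simp
  have r: "rowops (n-2) (addrow (-1) (n-1) (n-2) ?C) $$ (i,j) = (if i < n-2 then
       addrow (-1) (n-1) (n-2) ?C $$ (i,j) - addrow (-1) (n-1) (n-2) ?C $$ (Suc i,j)
       else addrow (-1) (n-1) (n-2) ?C $$ (i,j))"
    by (rule rowops_index[OF A1], insert i j n, auto)
  consider "i < n - 2" | "i = n - 2" | "i = n - 1" using i by linarith
  then show ?thesis
  proof cases
    case 1
    then have ne: "i \<noteq> n - 1" "Suc i < n" "Suc i \<noteq> n - 1" "i \<noteq> n - 2" using n by auto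
    have "rowops (n-2) (addrow (-1) (n-1) (n-2) ?C) $$ (i,j) = ?C $$ (i,j) - ?C $$ (Suc i, j)"
      unfolding r using 1 ne a1_index[OF i j] a1_index[OF ne(2) j] by simp
    also have "\<dots> = (if i = j then pX else 0) - (if Suc i = j then pX else 0)
        - (if i = Suc j then 1 else 0)"
      unfolding C_index[OF i j] C_index[OF ne(2) j] using ne by auto
    finally show ?thesis using ne by (auto simp: dK_def uK_def lK_def)
  next
    case 2
    have ne: "i \<noteq> n - 1" using 2 n by auto
    have "rowops (n-2) (addrow (-1) (n-1) (n-2) ?C) $$ (i,j) = ?C $$ (i,j)"
      unfolding r using 2 ne a1_index[OF i j] by simp
    also have "\<dots> = (if i = j then pX else 0) - (if n - 3 \<le> j then 1 else 0)"
      unfolding C_index[OF i j] using 2 n by auto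
    finally have eq: "rowops (n-2) (addrow (-1) (n-1) (n-2) ?C) $$ (i,j) = (if i = j then pX else 0) - (if n - 3 \<le> j then 1 else 0)" .
    consider "j < n - 3" | "j = n - 3" | "j = n - 2" | "j = n - 1" using j by linarith
    then show ?thesis using eq 2 n j by cases (simp_all add: nm dK_def uK_def lK_def)
  next
    case 3
    have ne: "n - 2 < n" "\<not> i < n - 2" using 3 n by auto
    have "rowops (n-2) (addrow (-1) (n-1) (n-2) ?C) $$ (i,j) = ?C $$ (i,j) - ?C $$ (n-2,j)"
      unfolding r using 3 ne a1_index[OF i j] by simp
    also have "\<dots> = (if j = n - 1 then pX else 0) - (if j = n - 2 then pX else 0)"
      unfolding C_index[OF i j] C_index[OF ne(1) j] using 3 n j by auto
    finally have eq: "rowops (n-2) (addrow (-1) (n-1) (n-2) ?C) $$ (i,j) = (if j = n - 1 then pX else 0) - (if j = n - 2 then pX else 0)" .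
    consider "j < n - 2" | "j = n - 2" | "j = n - 1" using j by linarith
    then show ?thesis using eq 3 n j by cases (simp_all add: nm dK_def uK_def lK_def)
  qed
qed

lemma charpoly_tri:
  assumes n: "n \<ge> 3"
  shows "Kpoly n = tri (dK n) (uK n) (lK n) n"
proof -
  let ?C = "char_poly_matrix (Kmat n)"
  have A1: "addrow (-1) (n-1) (n-2) ?C \<in> carrier_mat n n" using C_carrier by simp
  have "Kpoly n = det ?C" by (simp add: Kpoly_def char_poly_def)
  also have "\<dots> = det (addrow (-1) (n-1) (n-2) ?C)"
    by (rule det_addrow[symmetric, of _ n], insert n C_carrier, auto)
  also have "\<dots> = det (rowops (n-2) (addrow (-1) (n-1) (n-2) ?C))"
    by (rule rowops_det[symmetric, OF A1], insert n, auto)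
  also have "rowops (n-2) (addrow (-1) (n-1) (n-2) ?C) = tridiag n (dK n) (uK n) (lK n)"
  proof (rule eq_matI)
    fix i j assume "i < dim_row (tridiag n (dK n) (uK n) (lK n))" "j < dim_col (tridiag n (dK n) (uK n) (lK n))"
    then have i: "i < n" and j: "j < n" by (auto simp: tridiag_def)
    show "rowops (n-2) (addrow (-1) (n-1) (n-2) ?C) $$ (i,j) = tridiag n (dK n) (uK n) (lK n) $$ (i,j)"
      unfolding B_index[OF n i j] using i j by (simp add: tridiag_def)
  qed (auto simp: tridiag_def C_dims)
  finally show ?thesis by (simp add: det_tridiag)
qed

abbreviation G :: "nat \<Rightarrow> int poly" where "G \<equiv> tri (\<lambda>_. pX) (\<lambda>_. - pX) (\<lambda>_. - 1)"

lemma tri_K_G: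
  assumes "Suc m \<le> n - 2"
  shows "tri (dK n) (uK n) (lK n) m = G m \<and> tri (dK n) (uK n) (lK n) (Suc m) = G (Suc m)"
  using assms
proof (induction m)
  case 0
  then show ?case by (auto simp: dK_def)
next
  case (Suc m)
  then have "m \<noteq> n - 2" "Suc m \<noteq> n - 2" by auto
  with Suc show ?case by (auto simp: dK_def uK_def lK_def)
qed

lemma Kpoly_G:
  assumes n: "n \<ge> 3"
  shows "Kpoly n = G n - pX * G (n - 2)"
proof -
  obtain m where nm: "n = Suc (Suc (Suc m))" using n by (intro that[of "n - 3"]) simp
  have h: "tri (dK n) (uK n) (lK n) m = G m" "tri (dK n) (uK n) (lK n) (Suc m) = G (Suc m)"
    using tri_K_G[of m n] nm by auto
  have "Kpoly n = tri (dK n) (uK n) (lK n) n" by (rule charpoly_tri[OF n])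
  also have "\<dots> = G n - pX * G (n - 2)"
    unfolding nm using h unfolding nm by (simp add: dK_def uK_def lK_def algebra_simps)
  finally show ?thesis .
qed

definition pc :: "nat \<Rightarrow> nat set set" where
  "pc m = {S. S \<subseteq> {1..m} \<and> (\<forall>a\<in>S. \<forall>b\<in>S. a < b \<longrightarrow> Suc a < b)}"

definition cp :: "nat \<Rightarrow> int poly" where
  "cp m = (\<Sum>S\<in>pc m. monom ((-1) ^ card S) (Suc m - card S))"

lemma finite_pc[simp]: "finite (pc m)"
  by (rule finite_subset[of _ "Pow {1..m}"]) (auto simp: pc_def)

lemma pc_finite_mem: "S \<in> pc m \<Longrightarrow> finite S"
  by (auto simp: pc_def intro: finite_subset)

lemma pc_card: "S \<in> pc m \<Longrightarrow> card S \<le> m"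
  unfolding pc_def using card_mono[of "{1..m}" S] by auto

lemma pc_0: "pc 0 = {{}}" by (auto simp: pc_def)

lemma pc_1: "pc (Suc 0) = {{}, {1}}"
proof -
  have "S \<subseteq> {1} \<longleftrightarrow> S = {} \<or> S = {1}" for S :: "nat set" by auto
  then show ?thesis by (auto simp: pc_def)
qed

lemma pc_SS: "pc (Suc (Suc m)) = pc (Suc m) \<union> insert (Suc (Suc m)) ` pc m"
proof (intro equalityI subsetI)
  fix S assume S: "S \<in> pc (Suc (Suc m))"
  show "S \<in> pc (Suc m) \<union> insert (Suc (Suc m)) ` pc m"
  proof (cases "Suc (Suc m) \<in> S")
    case True
    have "S - {Suc (Suc m)} \<in> pc m"
    proof -
      have "Suc m \<notin> S" using S True unfolding pc_def by force
      then show ?thesis using S unfolding pc_def by (auto simp: le_Suc_eq)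
    qed
    moreover have "S = insert (Suc (Suc m)) (S - {Suc (Suc m)})" using True by auto
    ultimately show ?thesis by blast
  next
    case False
    then show ?thesis using S unfolding pc_def by (auto simp: le_Suc_eq)
  qed
next
  fix S assume "S \<in> pc (Suc m) \<union> insert (Suc (Suc m)) ` pc m"
  then show "S \<in> pc (Suc (Suc m))"
  proof
    assume "S \<in> pc (Suc m)" then show ?thesis unfolding pc_def by auto
  next
    assume "S \<in> insert (Suc (Suc m)) ` pc m"
    then obtain T where T: "T \<in> pc m" and ST: "S = insert (Suc (Suc m)) T" by blast
    have Tm: "T \<subseteq> {1..m}" and Tc: "\<forall>a\<in>T. \<forall>b\<in>T. a < b \<longrightarrow> Suc a < b" using T unfolding pc_def by auto
    have "S \<subseteq> {1..Suc (Suc m)}" using Tm ST by auto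
    moreover have "\<forall>a\<in>S. \<forall>b\<in>S. a < b \<longrightarrow> Suc a < b"
    proof (intro ballI impI)
      fix a b assume "a \<in> S" "b \<in> S" "a < b"
      then show "Suc a < b" using Tm Tc ST by (auto; fastforce)
    qed
    ultimately show ?thesis unfolding pc_def by blast
  qed
qed

lemma pX_monom: "pX * monom c k = monom c (Suc k)"
proof -
  have "pX = monom 1 1" by (simp add: monom_Suc monom_0)
  then show ?thesis by (simp add: mult_monom)
qed

lemma pc_not_SS: "S \<in> pc (Suc m) \<Longrightarrow> Suc (Suc m) \<notin> S"
  unfolding pc_def by auto

lemma cp_SS: "cp (Suc (Suc m)) = pX * cp (Suc m) - pX * cp m"
proof -
  have disj: "pc (Suc m) \<inter> insert (Suc (Suc m)) ` pc m = {}"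
    using pc_not_SS[of _ m] by blast
  have inj: "inj_on (insert (Suc (Suc m))) (pc m)"
  proof (rule inj_onI)
    fix A B assume "A \<in> pc m" "B \<in> pc m" "insert (Suc (Suc m)) A = insert (Suc (Suc m)) B"
    moreover have "Suc (Suc m) \<notin> A" "Suc (Suc m) \<notin> B" using calculation unfolding pc_def by auto
    ultimately show "A = B" using insert_ident by metis
  qed
  have "cp (Suc (Suc m)) = (\<Sum>S\<in>pc (Suc m). monom ((-1) ^ card S) (Suc (Suc (Suc m)) - card S))
     + (\<Sum>S\<in>insert (Suc (Suc m)) ` pc m. monom ((-1) ^ card S) (Suc (Suc (Suc m)) - card S))"
    unfolding cp_def pc_SS by (rule sum.union_disjoint, simp, simp, rule disj)
  also have "(\<Sum>S\<in>pc (Suc m). monom ((-1) ^ card S) (Suc (Suc (Suc m)) - card S)) = pX * cp (Suc m)"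
    unfolding cp_def sum_distrib_left pX_monom
  proof (rule sum.cong[OF refl])
    fix S assume "S \<in> pc (Suc m)"
    then have "card S \<le> Suc m" by (rule pc_card)
    then show "monom ((-1::int) ^ card S) (Suc (Suc (Suc m)) - card S) = monom ((-1) ^ card S) (Suc (Suc (Suc m) - card S))"
      by (simp add: Suc_diff_le)
  qed
  also have "(\<Sum>S\<in>insert (Suc (Suc m)) ` pc m. monom ((-1) ^ card S) (Suc (Suc (Suc m)) - card S))
      = (\<Sum>S\<in>pc m. monom ((-1) ^ card (insert (Suc (Suc m)) S)) (Suc (Suc (Suc m)) - card (insert (Suc (Suc m)) S)))"
    by (rule sum.reindex[OF inj, unfolded comp_def])
  also have "\<dots> = - (pX * cp m)"
    unfolding cp_def sum_distrib_left pX_monom sum_negf[symmetric]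
  proof (rule sum.cong[OF refl])
    fix S assume S: "S \<in> pc m"
    then have "Suc (Suc m) \<notin> S" "finite S" "card S \<le> m" using pc_card pc_finite_mem by (auto simp: pc_def)
    then show "monom ((-1::int) ^ card (insert (Suc (Suc m)) S)) (Suc (Suc (Suc m)) - card (insert (Suc (Suc m)) S))
       = - monom ((- 1) ^ card S) (Suc (Suc m - card S))"
      by (simp add: minus_monom Suc_diff_le)
  qed
  finally show ?thesis by simp
qed

lemma G_cp: "G (Suc m) = cp m \<and> G (Suc (Suc m)) = cp (Suc m)"
proof (induction m)
  case 0
  have "cp 0 = pX" by (simp add: cp_def pc_0 monom_Suc monom_0)
  moreover have "cp (Suc 0) = pX * pX - pX" by (simp add: cp_def pc_1 monom_Suc monom_0)
  ultimately show ?case by simp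
next
  case (Suc m)
  have e: "G (Suc (Suc (Suc m))) = pX * G (Suc (Suc m)) - (- pX) * (- 1) * G (Suc m)" by (rule tri.simps(3))
  have f: "(- pX) * (- 1) * x = pX * x" for x :: "int poly" by simp
  have "G (Suc (Suc (Suc m))) = pX * cp (Suc m) - pX * cp m"
    by (simp only: e f Suc.IH)
  then show ?case using Suc.IH cp_SS[of m] by simp
qed

lemma Kpoly_cp:
  assumes n: "n \<ge> 3"
  shows "Kpoly n = cp (n - 1) - pX * cp (n - 3)"
proof -
  obtain m where nm: "n = Suc (Suc (Suc m))" using n by (intro that[of "n - 3"]) simp
  have "G n = cp (n - 1)" using G_cp[of "Suc (Suc m)"] nm by simp
  moreover have "G (n - 2) = cp (n - 3)" using G_cp[of m] nm by simp
  ultimately show ?thesis using Kpoly_G[OF n] by simp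
qed

definition Cl :: "nat \<Rightarrow> nat set set" where
  "Cl n = {S. S \<subseteq> {1..n} \<and> (\<forall>a\<in>S. \<forall>b\<in>S. a \<noteq> b \<longrightarrow> Kcomm n a b)}"

lemma Kcomm_sym: "Kcomm n a b = Kcomm n b a" unfolding Kcomm_def by auto

lemma Kcomm_irrefl: "\<not> Kcomm n a a" unfolding Kcomm_def by auto

lemma finite_Cl[simp]: "finite (Cl n)"
  by (rule finite_subset[of _ "Pow {1..n}"]) (auto simp: Cl_def)

lemma Cl_finite_mem: "S \<in> Cl n \<Longrightarrow> finite S"
  by (auto simp: Cl_def intro: finite_subset)

lemma Cl_card: "S \<in> Cl n \<Longrightarrow> card S \<le> n"
  unfolding Cl_def using card_mono[of "{1..n}" S] by auto

lemma Cl_decomp: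
  assumes nm: "n = Suc (Suc (Suc m))"
  shows "Cl n = pc (Suc (Suc m)) \<union> insert n ` pc m"
proof -
  have K1: "Kcomm n a b \<longleftrightarrow> Suc a < b" if "1 \<le> a" "a < b" "b \<le> Suc (Suc m)" for a b
    using that nm unfolding Kcomm_def by auto
  have K2: "Kcomm n n b \<longleftrightarrow> b \<le> m" if "1 \<le> b" "b \<le> Suc (Suc m)" for b
    using that nm unfolding Kcomm_def by auto
  show ?thesis
  proof (intro equalityI subsetI)
    fix S assume S: "S \<in> Cl n"
    then have Sn: "S \<subseteq> {1..n}" and Sc: "\<And>a b. a \<in> S \<Longrightarrow> b \<in> S \<Longrightarrow> a \<noteq> b \<Longrightarrow> Kcomm n a b"
      unfolding Cl_def by auto
    show "S \<in> pc (Suc (Suc m)) \<union> insert n ` pc m"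
    proof (cases "n \<in> S")
      case False
      then have sub: "S \<subseteq> {1..Suc (Suc m)}" using Sn nm by (auto simp: le_Suc_eq)
      have "Suc a < b" if "a \<in> S" "b \<in> S" "a < b" for a b
      proof -
        have "1 \<le> a" "b \<le> Suc (Suc m)" using that sub by auto
        then show ?thesis using K1[of a b] Sc[of a b] that by auto
      qed
      then have "S \<in> pc (Suc (Suc m))" using sub unfolding pc_def by auto
      then show ?thesis by blast
    next
      case True
      have sub: "S - {n} \<subseteq> {1..m}"
      proof
        fix b assume b: "b \<in> S - {n}"
        then have "1 \<le> b" "b \<le> Suc (Suc m)" using Sn nm by (auto simp: le_Suc_eq)
        then show "b \<in> {1..m}" using K2[of b] Sc[of n b] b True by auto
      qed
      have "Suc a < b" if "a \<in> S - {n}" "b \<in> S - {n}" "a < b" for a b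
      proof -
        have "1 \<le> a" "b \<le> Suc (Suc m)" using that sub by auto
        then show ?thesis using K1[of a b] Sc[of a b] that by auto
      qed
      then have "S - {n} \<in> pc m" using sub unfolding pc_def by auto
      moreover have "S = insert n (S - {n})" using True by auto
      ultimately show ?thesis by blast
    qed
  next
    fix S assume "S \<in> pc (Suc (Suc m)) \<union> insert n ` pc m"
    then show "S \<in> Cl n"
    proof
      assume S: "S \<in> pc (Suc (Suc m))"
      then have sub: "S \<subseteq> {1..Suc (Suc m)}" and c: "\<And>a b. a \<in> S \<Longrightarrow> b \<in> S \<Longrightarrow> a < b \<Longrightarrow> Suc a < b"
        unfolding pc_def by auto
      have "Kcomm n a b" if "a \<in> S" "b \<in> S" "a \<noteq> b" for a b
      proof (cases "a < b")
        case True
        have "1 \<le> a" "b \<le> Suc (Suc m)" using that sub by auto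
        then show ?thesis using K1[of a b] c[of a b] that True by auto
      next
        case False then have ba: "b < a" using that by auto
        have "1 \<le> b" "a \<le> Suc (Suc m)" using that sub by auto
        then show ?thesis using K1[of b a] c[of b a] that ba Kcomm_sym by auto
      qed
      moreover have "S \<subseteq> {1..n}" using sub nm by auto
      ultimately show ?thesis unfolding Cl_def by auto
    next
      assume "S \<in> insert n ` pc m"
      then obtain T where T: "T \<in> pc m" and ST: "S = insert n T" by blast
      have sub: "T \<subseteq> {1..m}" and c: "\<And>a b. a \<in> T \<Longrightarrow> b \<in> T \<Longrightarrow> a < b \<Longrightarrow> Suc a < b"
        using T unfolding pc_def by auto
      have KT: "Kcomm n a b" if "a \<in> T" "b \<in> T" "a \<noteq> b" for a b
      proof (cases "a < b")
        case True
        have "1 \<le> a" "b \<le> Suc (Suc m)" using that sub by auto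
        then show ?thesis using K1[of a b] c[of a b] that True by auto
      next
        case False then have ba: "b < a" using that by auto
        have "1 \<le> b" "a \<le> Suc (Suc m)" using that sub by auto
        then show ?thesis using K1[of b a] c[of b a] that ba Kcomm_sym by auto
      qed
      have KnT: "Kcomm n n b" "Kcomm n b n" if "b \<in> T" for b
        using K2[of b] that sub Kcomm_sym by auto
      have "Kcomm n a b" if "a \<in> S" "b \<in> S" "a \<noteq> b" for a b
        using that ST KT KnT by auto
      moreover have "S \<subseteq> {1..n}" using sub nm ST by auto
      ultimately show ?thesis unfolding Cl_def by auto
    qed
  qed
qed

lemma Kpoly_Cl:
  assumes n: "n \<ge> 3"
  shows "Kpoly n = (\<Sum>S\<in>Cl n. monom ((-1) ^ card S) (n - card S))"
proof -
  obtain m where nm: "n = Suc (Suc (Suc m))" using n by (intro that[of "n - 3"]) simp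
  have disj: "pc (Suc (Suc m)) \<inter> insert n ` pc m = {}"
    using nm unfolding pc_def by auto
  have inj: "inj_on (insert n) (pc m)"
  proof (rule inj_onI)
    fix A B assume "A \<in> pc m" "B \<in> pc m" "insert n A = insert n B"
    moreover have "n \<notin> A" "n \<notin> B" using calculation nm unfolding pc_def by auto
    ultimately show "A = B" using insert_ident by metis
  qed
  have m3: "n - 3 = m" using nm by simp
  have "(\<Sum>S\<in>Cl n. monom ((-1::int) ^ card S) (n - card S))
     = (\<Sum>S\<in>pc (Suc (Suc m)). monom ((-1) ^ card S) (n - card S))
     + (\<Sum>S\<in>insert n ` pc m. monom ((-1) ^ card S) (n - card S))"
    unfolding Cl_decomp[OF nm] by (rule sum.union_disjoint, simp, simp, rule disj)
  also have "(\<Sum>S\<in>pc (Suc (Suc m)). monom ((-1::int) ^ card S) (n - card S)) = cp (n - 1)"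
    unfolding cp_def using nm by simp
  also have "(\<Sum>S\<in>insert n ` pc m. monom ((-1::int) ^ card S) (n - card S))
      = (\<Sum>S\<in>pc m. monom ((-1) ^ card (insert n S)) (n - card (insert n S)))"
    by (rule sum.reindex[OF inj, unfolded comp_def])
  also have "\<dots> = - (pX * cp (n - 3))"
    unfolding cp_def m3 sum_distrib_left pX_monom sum_negf[symmetric]
  proof (rule sum.cong[OF refl])
    fix S assume S: "S \<in> pc m"
    then have "n \<notin> S" "finite S" "card S \<le> m" using pc_card pc_finite_mem nm by (auto simp: pc_def)
    then show "monom ((-1::int) ^ card (insert n S)) (n - card (insert n S))
       = - monom ((- 1) ^ card S) (Suc (Suc m - card S))"
      using nm by (simp add: minus_monom Suc_diff_le)
  qed
  finally show ?thesis using Kpoly_cp[OF n] by simp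
qed



lemma Kcomm_sym': "Kcomm n a b = Kcomm n b a" unfolding Kcomm_def by auto

lemma Kcomm_irrefl': "\<not> Kcomm n a a" unfolding Kcomm_def by auto

lemma Kstep_sym: "(x,y) \<in> Kstep n \<Longrightarrow> (y,x) \<in> Kstep n"
  unfolding Kstep_def using Kcomm_sym' by blast

lemma Kequiv_eq: "Kequiv n = (Kstep n)\<^sup>*"
proof -
  have "Kstep n \<union> (Kstep n)\<inverse> = Kstep n" using Kstep_sym by blast
  then show ?thesis unfolding Kequiv_def by simp
qed

lemma Kequiv_refl[simp]: "(x,x) \<in> Kequiv n"
  unfolding Kequiv_eq by simp

lemma Kequiv_sym: "(x,y) \<in> Kequiv n \<Longrightarrow> (y,x) \<in> Kequiv n"
  unfolding Kequiv_eq
proof (induction rule: rtrancl_induct)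
  case base then show ?case by simp
next
  case (step y z)
  then show ?case using Kstep_sym by (meson converse_rtrancl_into_rtrancl)
qed

lemma Kequiv_trans: "(x,y) \<in> Kequiv n \<Longrightarrow> (y,z) \<in> Kequiv n \<Longrightarrow> (x,z) \<in> Kequiv n"
  unfolding Kequiv_eq by simp

lemma Kstep_cong: "(x,y) \<in> Kstep n \<Longrightarrow> (p@x@q, p@y@q) \<in> Kstep n"
proof -
  assume "(x,y) \<in> Kstep n"
  then obtain us vs a b where "x = us @ [a,b] @ vs" "y = us @ [b,a] @ vs" "Kcomm n a b"
    unfolding Kstep_def by blast
  then have "p@x@q = (p@us) @ [a,b] @ (vs@q)" "p@y@q = (p@us) @ [b,a] @ (vs@q)" "Kcomm n a b" by auto
  then show ?thesis unfolding Kstep_def by blast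
qed

lemma Kequiv_cong: "(x,y) \<in> Kequiv n \<Longrightarrow> (p@x@q, p@y@q) \<in> Kequiv n"
  unfolding Kequiv_eq
proof (induction rule: rtrancl_induct)
  case base then show ?case by simp
next
  case (step y z)
  then show ?case using Kstep_cong by (meson rtrancl_into_rtrancl)
qed

lemma Kstep_length: "(x,y) \<in> Kstep n \<Longrightarrow> length x = length y"
  unfolding Kstep_def by auto

lemma Kstep_set: "(x,y) \<in> Kstep n \<Longrightarrow> set x = set y"
  unfolding Kstep_def by auto

lemma Kequiv_length: "(x,y) \<in> Kequiv n \<Longrightarrow> length x = length y"
  unfolding Kequiv_eq by (induction rule: rtrancl_induct) (auto dest: Kstep_length)

lemma Kequiv_set: "(x,y) \<in> Kequiv n \<Longrightarrow> set x = set y"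
  unfolding Kequiv_eq by (induction rule: rtrancl_induct) (auto dest: Kstep_set)

lemma Kequiv_swap: "Kcomm n a b \<Longrightarrow> (a#b#q, b#a#q) \<in> Kequiv n"
proof -
  assume "Kcomm n a b"
  then have "([] @ [a,b] @ q, [] @ [b,a] @ q) \<in> Kstep n" unfolding Kstep_def by blast
  then show ?thesis unfolding Kequiv_eq by auto
qed

lemma Kequiv_Cons: "(x,y) \<in> Kequiv n \<Longrightarrow> (c#x, c#y) \<in> Kequiv n"
  using Kequiv_cong[of x y n "[c]" "[]"] by simp

lemma move_front: "(\<forall>c\<in>set p. Kcomm n a c) \<Longrightarrow> (p @ a # q, a # p @ q) \<in> Kequiv n"
proof (induction p)
  case Nil then show ?case by simp
next
  case (Cons c p)
  then have 1: "(c # p @ a # q, c # a # p @ q) \<in> Kequiv n" using Kequiv_Cons by auto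
  have "Kcomm n c a" using Cons.prems Kcomm_sym' by auto
  then have "(c # a # p @ q, a # c # p @ q) \<in> Kequiv n" by (rule Kequiv_swap)
  then show ?case using 1 Kequiv_trans by simp
qed

definition good :: "nat \<Rightarrow> nat \<Rightarrow> nat list \<Rightarrow> bool" where
  "good n a x \<longleftrightarrow> a \<in> set x \<and> (\<forall>c\<in>set (takeWhile (\<lambda>c. c \<noteq> a) x). Kcomm n a c)"

lemma takeWhile_ne_append: "a \<notin> set p \<Longrightarrow> takeWhile (\<lambda>c. c \<noteq> a) (p @ q) = p @ takeWhile (\<lambda>c. c \<noteq> a) q"
  by (induction p) auto

lemma good_step:
  assumes st: "(x,y) \<in> Kstep n" and g: "good n a x"
  shows "good n a y \<and> (remove1 a x, remove1 a y) \<in> Kequiv n"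
proof -
  obtain us vs c d where x: "x = us @ [c,d] @ vs" and y: "y = us @ [d,c] @ vs" and cd: "Kcomm n c d"
    using st unfolding Kstep_def by blast
  have ncd: "c \<noteq> d" using cd Kcomm_irrefl' by metis
  show ?thesis
  proof (cases "a \<in> set us")
    case True
    then have "takeWhile (\<lambda>c. c \<noteq> a) x = takeWhile (\<lambda>c. c \<noteq> a) y"
      unfolding x y by (simp add: takeWhile_append1)
    moreover have "(remove1 a x, remove1 a y) \<in> Kstep n"
    proof -
      have "remove1 a x = remove1 a us @ [c,d] @ vs" "remove1 a y = remove1 a us @ [d,c] @ vs"
        unfolding x y using True by (auto simp: remove1_append)
      then show ?thesis using cd unfolding Kstep_def by blast
    qed
    ultimately show ?thesis using g unfolding good_def Kequiv_eq x y by auto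
  next
    case nus: False
    show ?thesis
    proof (cases "a = c")
      case True
      then have tx: "takeWhile (\<lambda>c. c \<noteq> a) x = us" unfolding x using nus by (simp add: takeWhile_ne_append)
      have ty: "takeWhile (\<lambda>c. c \<noteq> a) y = us @ [d]" unfolding y using nus True ncd
        by (simp add: takeWhile_ne_append)
      have "Kcomm n a d" using True cd by simp
      then have "good n a y" using g tx ty True unfolding good_def y by auto
      moreover have "remove1 a x = remove1 a y" unfolding x y using nus True ncd by (simp add: remove1_append)
      ultimately show ?thesis by simp
    next
      case nc: False
      show ?thesis
      proof (cases "a = d")
        case True
        then have tx: "takeWhile (\<lambda>c. c \<noteq> a) x = us @ [c]" unfolding x using nus nc by (simp add: takeWhile_ne_append)
        have ty: "takeWhile (\<lambda>c. c \<noteq> a) y = us" unfolding y using nus True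
          by (simp add: takeWhile_ne_append)
        then have "good n a y" using g tx ty True unfolding good_def y by auto
        moreover have "remove1 a x = remove1 a y" unfolding x y using nus True nc by (simp add: remove1_append)
        ultimately show ?thesis by simp
      next
        case nd: False
        have tx: "takeWhile (\<lambda>c. c \<noteq> a) x = us @ [c,d] @ takeWhile (\<lambda>c. c \<noteq> a) vs"
          unfolding x using nus nc nd by (simp add: takeWhile_ne_append)
        have ty: "takeWhile (\<lambda>c. c \<noteq> a) y = us @ [d,c] @ takeWhile (\<lambda>c. c \<noteq> a) vs"
          unfolding y using nus nc nd by (simp add: takeWhile_ne_append)
        have "good n a y" using g tx ty unfolding good_def x y by auto
        moreover have "(remove1 a x, remove1 a y) \<in> Kstep n"
        proof -
          have "remove1 a x = us @ [c,d] @ remove1 a vs" "remove1 a y = us @ [d,c] @ remove1 a vs"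
            unfolding x y using nus nc nd by (auto simp: remove1_append)
          then show ?thesis using cd unfolding Kstep_def by blast
        qed
        ultimately show ?thesis unfolding Kequiv_eq by auto
      qed
    qed
  qed
qed

lemma good_equiv:
  assumes "(x,y) \<in> Kequiv n" "good n a x"
  shows "good n a y \<and> (remove1 a x, remove1 a y) \<in> Kequiv n"
  using assms(1)[unfolded Kequiv_eq] assms(2)
proof (induction rule: rtrancl_induct)
  case base then show ?case by simp
next
  case (step y z)
  then have "good n a y" "(remove1 a x, remove1 a y) \<in> Kequiv n" by auto
  with good_step[OF step(2)] show ?case using Kequiv_trans by blast
qed

lemma good_front: "good n a v \<Longrightarrow> (v, a # remove1 a v) \<in> Kequiv n"
proof -
  assume g: "good n a v"
  then have "a \<in> set v" unfolding good_def by simp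
  then obtain p q where v: "v = p @ a # q" and ap: "a \<notin> set p" by (meson split_list_first)
  have "takeWhile (\<lambda>c. c \<noteq> a) v = p" unfolding v using ap by (induction p) auto
  then have "\<forall>c\<in>set p. Kcomm n a c" using g unfolding good_def by simp
  then have "(v, a # p @ q) \<in> Kequiv n" unfolding v by (rule move_front)
  moreover have "remove1 a v = p @ q" unfolding v using ap by (simp add: remove1_append)
  ultimately show ?thesis by simp
qed

lemma good_Cons[simp]: "good n a (a # u)" unfolding good_def by simp

lemma Kcancel: "(a#u, a#v) \<in> Kequiv n \<Longrightarrow> (u,v) \<in> Kequiv n"
  using good_equiv[of "a#u" "a#v" n a] by simp

lemma Kcancel_prefix: "(p@u, p@v) \<in> Kequiv n \<Longrightarrow> (u,v) \<in> Kequiv n"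
  by (induction p) (auto dest: Kcancel)

lemma Klevi:
  assumes e: "(a#u, b#v) \<in> Kequiv n" and ab: "a \<noteq> b"
  shows "Kcomm n a b \<and> (\<exists>w. (u, b#w) \<in> Kequiv n \<and> (v, a#w) \<in> Kequiv n)"
proof -
  have g: "good n a (b#v)" and r: "(u, remove1 a (b#v)) \<in> Kequiv n"
    using good_equiv[OF e good_Cons] by auto
  have "Kcomm n a b" using g ab unfolding good_def by auto
  moreover have gv: "good n a v" using g ab unfolding good_def by auto
  have "(u, b # remove1 a v) \<in> Kequiv n" using r ab by simp
  moreover have "(v, a # remove1 a v) \<in> Kequiv n" using good_front[OF gv] .
  ultimately show ?thesis by blast
qed

lemma pre_min:
  "(a#v, p@u) \<in> Kequiv n \<Longrightarrow> a \<notin> set p \<Longrightarrow> \<exists>u'. (u, a#u') \<in> Kequiv n"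
proof (induction p arbitrary: v)
  case Nil
  then show ?case using Kequiv_sym by auto
next
  case (Cons b p)
  then have "a \<noteq> b" by auto
  then obtain w where "(p@u, a#w) \<in> Kequiv n" using Klevi[of a v b "p@u" n] Cons.prems by auto
  then have "(a#w, p@u) \<in> Kequiv n" by (rule Kequiv_sym)
  then show ?case using Cons by auto
qed

definition pcomm :: "nat \<Rightarrow> nat set \<Rightarrow> bool" where
  "pcomm n S \<longleftrightarrow> (\<forall>a\<in>S. \<forall>b\<in>S. a \<noteq> b \<longrightarrow> Kcomm n a b)"

lemma div_list:
  assumes "distinct s" "pcomm n (set s)" "\<forall>a\<in>set s. \<exists>v. (x, a#v) \<in> Kequiv n"
  shows "\<exists>u. (x, s@u) \<in> Kequiv n"
  using assms
proof (induction s)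
  case Nil
  then show ?case by (intro exI[of _ x]) simp
next
  case (Cons a s)
  have "pcomm n (set s)" using Cons.prems unfolding pcomm_def by auto
  then obtain u where u: "(x, s@u) \<in> Kequiv n" using Cons by auto
  obtain v where v: "(x, a#v) \<in> Kequiv n" using Cons.prems by auto
  have "(a#v, s@u) \<in> Kequiv n" using Kequiv_trans[OF Kequiv_sym[OF v] u] .
  moreover have as: "a \<notin> set s" using Cons.prems by auto
  ultimately obtain u' where u': "(u, a#u') \<in> Kequiv n" using pre_min by blast
  have "(s@u, s@a#u') \<in> Kequiv n" using Kequiv_cong[OF u', of s "[]"] by simp
  moreover have "\<forall>c\<in>set s. Kcomm n a c" using Cons.prems as unfolding pcomm_def by auto
  then have "(s@a#u', a#s@u') \<in> Kequiv n" by (rule move_front)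
  ultimately have "(x, (a#s)@u') \<in> Kequiv n" using u Kequiv_trans by simp
  then show ?case by blast
qed

lemma list_min:
  assumes "distinct s" "pcomm n (set s)" "a \<in> set s"
  shows "(s@u, a # remove1 a s @ u) \<in> Kequiv n"
proof -
  obtain p q where s: "s = p @ a # q" and ap: "a \<notin> set p" using assms(3) by (meson split_list_first)
  have "\<forall>c\<in>set p. Kcomm n a c" using assms s ap unfolding pcomm_def by auto
  then have "(p @ a # (q@u), a # p @ q @ u) \<in> Kequiv n" by (rule move_front)
  moreover have "remove1 a s = p @ q" unfolding s using ap by (simp add: remove1_append)
  ultimately show ?thesis unfolding s by simp
qed



lemma card_image_eqrel:
  assumes "\<And>x y. x \<in> A \<Longrightarrow> y \<in> A \<Longrightarrow> f x = f y \<longleftrightarrow> g x = g y"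
  shows "card (f ` A) = card (g ` A)"
proof -
  define h where "h = (\<lambda>Y. g (SOME x. x \<in> A \<and> f x = Y))"
  have hf: "h (f x) = g x" if "x \<in> A" for x
  proof -
    have "\<exists>x'. x' \<in> A \<and> f x' = f x" using that by blast
    then have "(SOME x'. x' \<in> A \<and> f x' = f x) \<in> A \<and> f (SOME x'. x' \<in> A \<and> f x' = f x) = f x"
      by (rule someI_ex)
    then show ?thesis unfolding h_def using assms that by blast
  qed
  have "bij_betw h (f ` A) (g ` A)"
  proof (rule bij_betw_imageI)
    show "inj_on h (f ` A)"
      by (rule inj_onI) (auto simp: hf assms)
    show "h ` f ` A = g ` A" by (force simp: hf image_iff)
  qed
  then show ?thesis by (rule bij_betw_same_card)
qed

definition cls :: "nat \<Rightarrow> nat list \<Rightarrow> nat list set" where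
  "cls n x = Kequiv n `` {x}"

definition D :: "nat \<Rightarrow> nat \<Rightarrow> nat list set set" where
  "D n k = cls n ` Kwords n k"

definition MinC :: "nat list set \<Rightarrow> nat set" where
  "MinC X = {a. \<exists>v. a # v \<in> X}"

lemma mem_cls: "y \<in> cls n x \<longleftrightarrow> (x, y) \<in> Kequiv n"
  unfolding cls_def by auto

lemma cls_eq: "cls n x = cls n y \<longleftrightarrow> (x, y) \<in> Kequiv n"
proof
  assume "cls n x = cls n y"
  then have "y \<in> cls n x" using mem_cls[of y n y] by simp
  then show "(x, y) \<in> Kequiv n" by (simp add: mem_cls)
next
  assume e: "(x, y) \<in> Kequiv n"
  show "cls n x = cls n y"
    unfolding cls_def using Kequiv_trans[OF e] Kequiv_trans[OF Kequiv_sym[OF e]] by auto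
qed

lemma finite_Kwords: "finite (Kwords n k)"
proof -
  have "Kwords n k = {xs. set xs \<subseteq> {1..n} \<and> length xs = k}" unfolding Kwords_def by auto
  then show ?thesis using finite_lists_length_eq[of "{1..n}" k] by simp
qed

lemma finite_D[simp]: "finite (D n k)"
  unfolding D_def using finite_Kwords by simp

lemma Kwords_equiv: "x \<in> Kwords n k \<Longrightarrow> (x, y) \<in> Kequiv n \<Longrightarrow> y \<in> Kwords n k"
  unfolding Kwords_def using Kequiv_length Kequiv_set by fastforce

lemma Kcount_D: "Kcount n k = card (D n k)"
proof -
  have "Kwords n k // (Kequiv n \<inter> (Kwords n k \<times> Kwords n k)) = D n k"
  proof -
    have "(Kequiv n \<inter> (Kwords n k \<times> Kwords n k)) `` {x} = cls n x" if "x \<in> Kwords n k" for x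
      unfolding cls_def using that Kwords_equiv by auto
    then show ?thesis unfolding quotient_def D_def by auto
  qed
  then show ?thesis unfolding Kcount_def by simp
qed

lemma MinC_cls: "MinC (cls n x) = {a. \<exists>v. (x, a # v) \<in> Kequiv n}"
  unfolding MinC_def mem_cls by simp

lemma card_div:
  assumes S: "S \<in> Cl n"
  shows "card {X \<in> D n k. S \<subseteq> MinC X} = (if card S \<le> k then card (D n (k - card S)) else 0)"
proof -
  define s where "s = sorted_list_of_set S"
  have fS: "finite S" using S by (rule Cl_finite_mem)
  have ds: "distinct s" and ss: "set s = S" and ls: "length s = card S"
    using fS unfolding s_def by auto
  have pc: "pcomm n (set s)" using S ss unfolding Cl_def pcomm_def by auto
  have Sn: "S \<subseteq> {1..n}" using S unfolding Cl_def by auto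
  have char: "S \<subseteq> MinC (cls n x) \<longleftrightarrow> (\<exists>u. (x, s @ u) \<in> Kequiv n)" for x
  proof
    assume "S \<subseteq> MinC (cls n x)"
    then have "\<forall>a\<in>set s. \<exists>v. (x, a#v) \<in> Kequiv n" using ss unfolding MinC_cls by auto
    then show "\<exists>u. (x, s @ u) \<in> Kequiv n" using div_list[OF ds pc] by blast
  next
    assume "\<exists>u. (x, s @ u) \<in> Kequiv n"
    then obtain u where u: "(x, s @ u) \<in> Kequiv n" by blast
    show "S \<subseteq> MinC (cls n x)"
    proof
      fix a assume "a \<in> S"
      then have "(s @ u, a # remove1 a s @ u) \<in> Kequiv n" using list_min[OF ds pc] ss by auto
      then show "a \<in> MinC (cls n x)" unfolding MinC_cls using u Kequiv_trans by blast
    qed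
  qed
  show ?thesis
  proof (cases "card S \<le> k")
    case False
    have "{X \<in> D n k. S \<subseteq> MinC X} = {}"
    proof (rule ccontr)
      assume "{X \<in> D n k. S \<subseteq> MinC X} \<noteq> {}"
      then obtain x where x: "x \<in> Kwords n k" "S \<subseteq> MinC (cls n x)" unfolding D_def by auto
      then obtain u where "(x, s @ u) \<in> Kequiv n" using char by blast
      then have "length x = length s + length u" using Kequiv_length by fastforce
      then show False using x False ls unfolding Kwords_def by auto
    qed
    then show ?thesis using False by simp
  next
    case True
    let ?f = "\<lambda>u. cls n (s @ u)"
    have eq: "{X \<in> D n k. S \<subseteq> MinC X} = ?f ` Kwords n (k - card S)"
    proof (intro equalityI subsetI)
      fix X assume "X \<in> {X \<in> D n k. S \<subseteq> MinC X}"
      then obtain x where x: "x \<in> Kwords n k" "X = cls n x" "S \<subseteq> MinC (cls n x)" unfolding D_def by auto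
      then obtain u where u: "(x, s @ u) \<in> Kequiv n" using char by blast
      have "s @ u \<in> Kwords n k" using Kwords_equiv[OF x(1) u] .
      then have "u \<in> Kwords n (k - card S)" using ls unfolding Kwords_def by auto
      moreover have "X = ?f u" using x(2) u cls_eq by blast
      ultimately show "X \<in> ?f ` Kwords n (k - card S)" by blast
    next
      fix X assume "X \<in> ?f ` Kwords n (k - card S)"
      then obtain u where u: "u \<in> Kwords n (k - card S)" "X = ?f u" by blast
      have "s @ u \<in> Kwords n k" using u(1) ls ss Sn True unfolding Kwords_def by auto
      moreover have "\<exists>u'. (s @ u, s @ u') \<in> Kequiv n" by (intro exI[of _ u]) simp
      then have "S \<subseteq> MinC (?f u)" using char[of "s @ u"] by simp
      ultimately show "X \<in> {X \<in> D n k. S \<subseteq> MinC X}" unfolding D_def using u(2) by auto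
    qed
    have "card (?f ` Kwords n (k - card S)) = card (cls n ` Kwords n (k - card S))"
    proof (rule card_image_eqrel)
      fix x y
      show "(cls n (s @ x) = cls n (s @ y)) = (cls n x = cls n y)"
        unfolding cls_eq using Kcancel_prefix[of s x y n] Kequiv_cong[of x y n s "[]"] by auto
    qed
    then show ?thesis using True eq unfolding D_def by simp
  qed
qed

lemma MinC_props:
  assumes X: "X \<in> D n k"
  shows "MinC X \<in> Cl n" "MinC X = {} \<longleftrightarrow> k = 0"
proof -
  obtain x where x: "x \<in> Kwords n k" "X = cls n x" using X unfolding D_def by auto
  have sub: "MinC X \<subseteq> {1..n}"
  proof
    fix a assume "a \<in> MinC X"
    then obtain v where "(x, a#v) \<in> Kequiv n" unfolding x MinC_cls by auto
    then have "a \<in> set x" using Kequiv_set by fastforce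
    then show "a \<in> {1..n}" using x unfolding Kwords_def by auto
  qed
  have "Kcomm n a b" if "a \<in> MinC X" "b \<in> MinC X" "a \<noteq> b" for a b
  proof -
    have "a \<in> MinC (cls n x)" "b \<in> MinC (cls n x)" using that x(2) by auto
    then obtain v w where "(x, a#v) \<in> Kequiv n" "(x, b#w) \<in> Kequiv n" unfolding MinC_cls by blast
    then have "(a#v, b#w) \<in> Kequiv n" using Kequiv_sym Kequiv_trans by blast
    then show ?thesis using Klevi that by blast
  qed
  then show "MinC X \<in> Cl n" using sub unfolding Cl_def by auto
  show "MinC X = {} \<longleftrightarrow> k = 0"
  proof
    assume "MinC X = {}"
    show "k = 0"
    proof (cases x)
      case Nil then show ?thesis using x unfolding Kwords_def by auto
    next
      case (Cons c x')
      then have "c \<in> MinC X" unfolding x MinC_cls by (auto intro!: exI[of _ x'])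
      then show ?thesis using \<open>MinC X = {}\<close> by auto
    qed
  next
    assume "k = 0"
    then have "x = []" using x unfolding Kwords_def by auto
    then show "MinC X = {}" unfolding x MinC_cls using Kequiv_length by fastforce
  qed
qed

lemma alt_sum:
  assumes "finite A"
  shows "(\<Sum>S\<in>Pow A. (-1::int) ^ card S) = (if A = {} then 1 else 0)"
  using assms
proof (induction A rule: finite_induct)
  case empty
  then show ?case by simp
next
  case (insert a A)
  have inj: "inj_on (insert a) (Pow A)"
    using insert.hyps by (auto simp: inj_on_def)
  have disj: "Pow A \<inter> insert a ` Pow A = {}" using insert.hyps by auto
  have fP: "finite (Pow A)" using insert.hyps by simp
  have "(\<Sum>S\<in>Pow (insert a A). (-1::int) ^ card S)
     = (\<Sum>S\<in>Pow A. (-1::int) ^ card S) + (\<Sum>S\<in>insert a ` Pow A. (-1::int) ^ card S)"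
    unfolding Pow_insert by (rule sum.union_disjoint[OF fP finite_imageI[OF fP] disj])
  also have "(\<Sum>S\<in>insert a ` Pow A. (-1::int) ^ card S) = (\<Sum>S\<in>Pow A. (-1::int) ^ card (insert a S))"
    by (rule sum.reindex[OF inj, unfolded comp_def])
  also have "\<dots> = - (\<Sum>S\<in>Pow A. (-1::int) ^ card S)"
    unfolding sum_negf[symmetric]
  proof (rule sum.cong[OF refl])
    fix S assume "S \<in> Pow A"
    then have "a \<notin> S" "finite S" using insert.hyps finite_subset by auto
    then show "(-1::int) ^ card (insert a S) = - ((-1) ^ card S)" by simp
  qed
  finally show ?case by simp
qed

lemma main_sum:
  "(\<Sum>S\<in>Cl n. (-1::int) ^ card S * (if card S \<le> k then int (Kcount n (k - card S)) else 0))
     = (if k = 0 then 1 else 0)"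
proof -
  have "(\<Sum>S\<in>Cl n. (-1::int) ^ card S * (if card S \<le> k then int (Kcount n (k - card S)) else 0))
      = (\<Sum>S\<in>Cl n. (-1::int) ^ card S * int (card {X \<in> D n k. S \<subseteq> MinC X}))"
    by (rule sum.cong[OF refl]) (simp add: card_div Kcount_D)
  also have "\<dots> = (\<Sum>S\<in>Cl n. \<Sum>X\<in>D n k. if S \<subseteq> MinC X then (-1::int) ^ card S else 0)"
  proof (rule sum.cong[OF refl])
    fix S
    have "int (card {X \<in> D n k. S \<subseteq> MinC X}) = (\<Sum>X\<in>D n k. if S \<subseteq> MinC X then 1 else 0)"
      by (simp add: sum.If_cases Int_def)
    then show "(-1::int) ^ card S * int (card {X \<in> D n k. S \<subseteq> MinC X}) =
      (\<Sum>X\<in>D n k. if S \<subseteq> MinC X then (-1::int) ^ card S else 0)"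
      unfolding sum_distrib_left by (simp only: \<open>int (card {X \<in> D n k. S \<subseteq> MinC X}) = _\<close> sum_distrib_left) (rule sum.cong, auto)
  qed
  also have "\<dots> = (\<Sum>X\<in>D n k. \<Sum>S\<in>Cl n. if S \<subseteq> MinC X then (-1::int) ^ card S else 0)"
    by (rule sum.swap)
  also have "\<dots> = (\<Sum>X\<in>D n k. \<Sum>S\<in>Pow (MinC X). (-1::int) ^ card S)"
  proof (rule sum.cong[OF refl])
    fix X assume X: "X \<in> D n k"
    have M: "MinC X \<in> Cl n" using MinC_props[OF X] by simp
    have "Pow (MinC X) \<subseteq> Cl n" using M unfolding Cl_def by auto
    then have "Cl n \<inter> {S. S \<subseteq> MinC X} = Pow (MinC X)" by auto
    then show "(\<Sum>S\<in>Cl n. if S \<subseteq> MinC X then (-1::int) ^ card S else 0) = (\<Sum>S\<in>Pow (MinC X). (-1::int) ^ card S)"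
      by (simp add: sum.If_cases)
  qed
  also have "\<dots> = (\<Sum>X\<in>D n k. if k = 0 then 1 else 0)"
  proof (rule sum.cong[OF refl])
    fix X assume X: "X \<in> D n k"
    have fin: "finite (MinC X)" using MinC_props(1)[OF X] Cl_finite_mem by blast
    show "(\<Sum>S\<in>Pow (MinC X). (-1::int) ^ card S) = (if k = 0 then 1 else 0)"
      using alt_sum[OF fin] MinC_props(2)[OF X] by simp
  qed
  also have "\<dots> = (if k = 0 then int (card (D n 0)) else 0)" by simp
  also have "card (D n 0) = 1"
  proof -
    have "Kwords n 0 = {[]}" unfolding Kwords_def by auto
    then show ?thesis unfolding D_def by simp
  qed
  finally show ?thesis by simp
qed

lemma coeff_Kpoly_rev:
  assumes n: "n \<ge> 3"
  shows "coeff (Kpoly_rev n) j = (\<Sum>S\<in>Cl n. if j = card S then (-1) ^ card S else 0)"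
proof -
  have cK: "coeff (Kpoly n) i = (\<Sum>S\<in>Cl n. if n - card S = i then (-1) ^ card S else 0)" for i
    unfolding Kpoly_Cl[OF n] coeff_sum coeff_monom by simp
  have "coeff (Kpoly_rev n) j = (\<Sum>i\<le>n. if i = j then coeff (Kpoly n) (n - i) else 0)"
    unfolding Kpoly_rev_def coeff_sum coeff_monom by simp
  also have "\<dots> = (if j \<le> n then coeff (Kpoly n) (n - j) else 0)"
    by (simp add: sum.delta')
  also have "\<dots> = (\<Sum>S\<in>Cl n. if j = card S then (-1) ^ card S else 0)"
  proof (cases "j \<le> n")
    case True
    show ?thesis unfolding cK using True
    proof (simp, intro sum.cong refl)
      fix S assume "S \<in> Cl n"
      then have "card S \<le> n" by (rule Cl_card)
      then have "(n - card S = n - j) = (j = card S)" using True by auto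
      then show "(if n - card S = n - j then (-1::int) ^ card S else 0) = (if j = card S then (-1) ^ card S else 0)"
        by simp
    qed
  next
    case False
    have "(if j = card S then (-1::int) ^ card S else 0) = 0" if "S \<in> Cl n" for S
      using Cl_card[OF that] False by auto
    then show ?thesis using False by simp
  qed
  finally show ?thesis .
qed

lemma conv_sum:
  assumes n: "n \<ge> 3"
  shows "(\<Sum>i=0..k. coeff (Kpoly_rev n) i * int (Kcount n (k - i))) = (if k = 0 then 1 else 0)"
proof -
  have "(\<Sum>i=0..k. coeff (Kpoly_rev n) i * int (Kcount n (k - i)))
      = (\<Sum>i=0..k. \<Sum>S\<in>Cl n. if i = card S then (-1) ^ card S * int (Kcount n (k - i)) else 0)"
    unfolding coeff_Kpoly_rev[OF n] sum_distrib_right by (rule sum.cong, simp, rule sum.cong, auto)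
  also have "\<dots> = (\<Sum>S\<in>Cl n. \<Sum>i=0..k. if i = card S then (-1) ^ card S * int (Kcount n (k - i)) else 0)"
    by (rule sum.swap)
  also have "\<dots> = (\<Sum>S\<in>Cl n. (-1::int) ^ card S * (if card S \<le> k then int (Kcount n (k - card S)) else 0))"
    by (rule sum.cong, simp, simp add: sum.delta')
  also have "\<dots> = (if k = 0 then 1 else 0)" by (rule main_sum)
  finally show ?thesis .
qed

theorem proposition3:
  fixes n :: nat
  assumes "n \<ge> 3"
  shows "Abs_fps (\<lambda>k. of_nat (Kcount n k) :: rat)
           = inverse (fps_of_poly (map_poly of_int (Kpoly_rev n)))"
proof -
  let ?P = "fps_of_poly (map_poly of_int (Kpoly_rev n)) :: rat fps"
  let ?A = "Abs_fps (\<lambda>k. of_nat (Kcount n k) :: rat)"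
  have "?P * ?A = 1"
  proof (rule fps_ext)
    fix k
    have "fps_nth (?P * ?A) k = (\<Sum>i=0..k. of_int (coeff (Kpoly_rev n) i) * of_nat (Kcount n (k - i)))"
      unfolding fps_mult_nth by (simp add: coeff_map_poly)
    also have "\<dots> = of_int (\<Sum>i=0..k. coeff (Kpoly_rev n) i * int (Kcount n (k - i)))"
      by simp
    also have "\<dots> = fps_nth (1 :: rat fps) k" unfolding conv_sum[OF assms] by simp
    finally show "fps_nth (?P * ?A) k = fps_nth (1 :: rat fps) k" .
  qed
  then show ?thesis by (simp add: fps_inverse_unique)
qed

end
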